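(* Fix $\theta\in[0,1]$ and let \[ A_r(\theta)=\Big[1+\theta\Big(\frac{2r}{n}-1\Big)\Big]\frac{B_r}{r},\qquad 1\le r\le n-1 . \] (i) For any $r^*(\theta)\in\arg\max\{A_r(\theta):1\le r\le n-1\}$, the prize schedule ${\bf v}^{r^*(\theta)}$ (awarding $r^*(\theta)$ equal prizes $1/r^*(\theta)$ at the top and zero to everyone else) maximizes $M({\bf v},\theta)$ over ${\bf v}\in\mathcal V$, and hence maximizes the equilibrium effort; the maximal value is $\max_r A_r(\theta)$. (ii) The optimal number of top prizes is weakly increasing in loss aversion: if $0\le\theta<\theta'\le1$, then $\max\arg\max_r A_r(\theta)\le\max\arg\max_r A_r(\theta')$ and $\min\arg\max_r A_r(\theta)\le\min\arg\max_r A_r(\theta')$.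
   Context: Fix an integer $n\ge 2$ and a noise distribution with cdf $F$ and density $f$ on $\mathbb R$ (integrals finite). For $r=1,\dots,n$ let $g_r(u)=u^{n-r}(1-u)^{r-1}$ and $\beta_r=\binom{n-1}{r-1}\int g_r'(F(t))f(t)^2dt$ (marginal effect of own effort on the probability of being ranked $r$ in a symmetric profile); $B_r=\sum_{k=1}^r\beta_k$, which for $1\le r\le n-1$ equals $r\binom{n-1}{r}\int F(t)^{n-1-r}[1-F(t)]^{r-1}f(t)^2dt>0$, and $B_n=0$. Let $\mathcal V=\{{\bf v}\in\mathbb R^n: v_1\ge\dots\ge v_n\ge 0,\ \sum_r v_r=1\}$, $R({\bf v})=\sum_r\beta_rv_r$, $L({\bf v})=-\frac1n\sum_{r=1}^n\sum_{s<r}(\beta_r+\beta_s)(v_s-v_r)$, $M({\bf v},\theta)=R({\bf v})+\theta L({\bf v})$, $\theta\in[0,1]$. For $1\le s\le n-1$, ${\bf v}^s=(\frac1s,\dots,\frac1s,0,\dots,0)$ has $s$ nonzero prizes. The symmetric equilibrium effort solves $c'(x^* )=M({\bf v},\theta)$ for a strictly increasing, strictly convex, differentiable cost $c$ with $c(0)=c'(0)=0$, so it is strictly increasing in $M$. *)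

theory Defs
  imports "HOL-Analysis.Analysis"
begin

text \<open>Noise distribution: density f (nonnegative, Borel, integrating to 1, with
  f squared integrable so that all integrals below are finite) and cdf F.\<close>
definition noise_dist :: "(real \<Rightarrow> real) \<Rightarrow> (real \<Rightarrow> real) \<Rightarrow> bool" where
  "noise_dist F f \<longleftrightarrow>
     (\<forall>t. 0 \<le> f t) \<and> f \<in> borel_measurable lborel \<and> integrable lborel f \<and>
     (\<integral>t. f t \<partial>lborel) = 1 \<and> integrable lborel (\<lambda>t. (f t)^2) \<and>
     (\<forall>t. F t = (LINT s:{..t}|lborel. f s))"

definition gfun :: "nat \<Rightarrow> nat \<Rightarrow> real \<Rightarrow> real" where
  "gfun n r u = u ^ (n - r) * (1 - u) ^ (r - 1)"

definition beta :: "nat \<Rightarrow> (real \<Rightarrow> real) \<Rightarrow> (real \<Rightarrow> real) \<Rightarrow> nat \<Rightarrow> real" where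
  "beta n F f r = real ((n - 1) choose (r - 1)) *
      (\<integral>t. deriv (gfun n r) (F t) * (f t)^2 \<partial>lborel)"

definition Bsum :: "nat \<Rightarrow> (real \<Rightarrow> real) \<Rightarrow> (real \<Rightarrow> real) \<Rightarrow> nat \<Rightarrow> real" where
  "Bsum n F f r = (\<Sum>k=1..r. beta n F f k)"

definition prizeV :: "nat \<Rightarrow> (nat \<Rightarrow> real) set" where
  "prizeV n = {v. (\<forall>r\<in>{1..<n}. v (Suc r) \<le> v r) \<and> 0 \<le> v n \<and> (\<Sum>r=1..n. v r) = 1}"

definition Rfun :: "nat \<Rightarrow> (real \<Rightarrow> real) \<Rightarrow> (real \<Rightarrow> real) \<Rightarrow> (nat \<Rightarrow> real) \<Rightarrow> real" where
  "Rfun n F f v = (\<Sum>r=1..n. beta n F f r * v r)"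

definition Lfun :: "nat \<Rightarrow> (real \<Rightarrow> real) \<Rightarrow> (real \<Rightarrow> real) \<Rightarrow> (nat \<Rightarrow> real) \<Rightarrow> real" where
  "Lfun n F f v = - (1 / real n) *
      (\<Sum>r=1..n. \<Sum>s=1..<r. (beta n F f r + beta n F f s) * (v s - v r))"

definition Mfun :: "nat \<Rightarrow> (real \<Rightarrow> real) \<Rightarrow> (real \<Rightarrow> real) \<Rightarrow> (nat \<Rightarrow> real) \<Rightarrow> real \<Rightarrow> real" where
  "Mfun n F f v \<theta> = Rfun n F f v + \<theta> * Lfun n F f v"

definition topv :: "nat \<Rightarrow> nat \<Rightarrow> real" where
  "topv s = (\<lambda>r. if 1 \<le> r \<and> r \<le> s then 1 / real s else 0)"

definition Acoef :: "nat \<Rightarrow> (real \<Rightarrow> real) \<Rightarrow> (real \<Rightarrow> real) \<Rightarrow> real \<Rightarrow> nat \<Rightarrow> real" where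
  "Acoef n F f \<theta> r = (1 + \<theta> * (2 * real r / real n - 1)) * Bsum n F f r / real r"

definition argmaxA :: "nat \<Rightarrow> (real \<Rightarrow> real) \<Rightarrow> (real \<Rightarrow> real) \<Rightarrow> real \<Rightarrow> nat set" where
  "argmaxA n F f \<theta> = {r \<in> {1..n-1}. \<forall>k\<in>{1..n-1}. Acoef n F f \<theta> k \<le> Acoef n F f \<theta> r}"

definition admissible_cost :: "(real \<Rightarrow> real) \<Rightarrow> bool" where
  "admissible_cost c \<longleftrightarrow>
     strict_mono_on {0..} c \<and>
     (\<forall>x\<in>{0..}. \<forall>y\<in>{0..}. x \<noteq> y \<longrightarrow>
        (\<forall>t::real. 0 < t \<and> t < 1 \<longrightarrow> c ((1 - t) * x + t * y) < (1 - t) * c x + t * c y)) \<and>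
     (\<forall>x\<ge>0. c differentiable at x) \<and> c 0 = 0 \<and> deriv c 0 = 0"

end

theory Submission
  imports Defs
begin

definition gd :: "nat \<Rightarrow> nat \<Rightarrow> real \<Rightarrow> real" where
  "gd n r u = real (n - r) * u^(n-r-1) * (1-u)^(r-1) - real (r-1) * u^(n-r) * (1-u)^(r-1-1)"

lemma gfun_deriv: "deriv (gfun n r) = gd n r"
proof
  fix u :: real
  have "(gfun n r has_real_derivative gd n r u) (at u)"
    unfolding gfun_def gd_def
    by (auto intro!: derivative_eq_intros simp: algebra_simps)
  then show "deriv (gfun n r) u = gd n r u" by (rule DERIV_imp_deriv)
qed

lemma gd_bound:
  assumes "0 \<le> u" "u \<le> 1"
  shows "\<bar>gd n r u\<bar> \<le> real (n - r) + real (r - 1)"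
proof -
  have a: "\<bar>u^(n-r-1) * (1-u)^(r-1)\<bar> \<le> 1" "\<bar>u^(n-r) * (1-u)^(r-1-1)\<bar> \<le> 1"
    using assms by (auto simp: abs_mult intro!: mult_le_one power_le_one)
  have "\<bar>gd n r u\<bar> \<le> real (n - r) * \<bar>u^(n-r-1) * (1-u)^(r-1)\<bar> + real (r-1) * \<bar>u^(n-r) * (1-u)^(r-1-1)\<bar>"
    unfolding gd_def by (rule order_trans[OF abs_triangle_ineq4]) (simp add: abs_mult mult.assoc)
  also have "\<dots> \<le> real (n - r) * 1 + real (r-1) * 1"
    by (intro add_mono mult_left_mono a) auto
  finally show ?thesis by simp
qed




definition Dsum :: "nat \<Rightarrow> nat \<Rightarrow> real \<Rightarrow> real" where
  "Dsum n r u = (\<Sum>k=1..r. real ((n - 1) choose (k - 1)) * gd n k u)"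

lemma Dsum_closed:
  "n = j + k + 2 \<Longrightarrow> Dsum n (Suc j) u = real (Suc j) * real ((n-1) choose Suc j) * u^k * (1-u)^j"
proof (induction j arbitrary: k)
  case 0
  then show ?case by (simp add: Dsum_def gd_def)
next
  case (Suc j)
  have IH: "Dsum n (Suc j) u = real (Suc j) * real ((n-1) choose Suc j) * u^(Suc k) * (1-u)^j"
    using Suc by simp
  have bin: "real (Suc (Suc j)) * real ((n-1) choose Suc (Suc j)) = real (Suc k) * real ((n-1) choose Suc j)"
  proof -
    have "Suc (Suc j) * ((n-1) choose Suc (Suc j)) = (n-1) * ((n-1-1) choose Suc j)"
      by (rule binomial_absorption)
    moreover have "(n - 1 - Suc j) * ((n-1) choose Suc j) = (n-1) * ((n-1-1) choose Suc j)"
      by (rule binomial_absorb_comp)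
    moreover have "n - 1 - Suc j = Suc k" using Suc by simp
    ultimately have "Suc (Suc j) * ((n-1) choose Suc (Suc j)) = Suc k * ((n-1) choose Suc j)" by simp
    then show ?thesis by (metis of_nat_mult)
  qed
  have g: "gd n (Suc (Suc j)) u = real (Suc k) * u^k * (1-u)^(Suc j) - real (Suc j) * u^(Suc k) * (1-u)^j"
    using Suc.prems by (simp add: gd_def)
  have "Dsum n (Suc (Suc j)) u = Dsum n (Suc j) u + real ((n-1) choose Suc j) * gd n (Suc (Suc j)) u"
    by (simp add: Dsum_def)
  also have "\<dots> = real (Suc k) * real ((n-1) choose Suc j) * u^k * (1-u)^(Suc j)"
    unfolding IH g by (simp add: algebra_simps)
  also have "\<dots> = real (Suc (Suc j)) * real ((n-1) choose Suc (Suc j)) * u^k * (1-u)^(Suc j)"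
    using bin by simp
  finally show ?case .
qed

lemma Dsum_nonneg:
  assumes "1 \<le> r" "r \<le> n - 1" "0 \<le> u" "u \<le> 1"
  shows "0 \<le> Dsum n r u"
proof -
  obtain j where j: "r = Suc j" using assms by (cases r) auto
  have k: "n = j + (n - j - 2) + 2" using assms j by simp
  show ?thesis using Dsum_closed[OF k, of u] j assms by simp
qed

lemma Dsum_n:
  assumes "n \<ge> 2"
  shows "Dsum n n u = 0"
proof -
  define j where "j = n - 2"
  have j: "n = j + 0 + 2" using assms by (simp add: j_def)
  have "Dsum n n u = Dsum n (Suc j) u + real ((n-1) choose (n-1)) * gd n n u"
    using j by (simp add: Dsum_def)
  also have "\<dots> = 0" using Dsum_closed[OF j, of u] j by (simp add: gd_def)
  finally show ?thesis .
qed




lemma noiseD: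
  assumes "noise_dist F f"
  shows "\<And>t. 0 \<le> f t" "f \<in> borel_measurable lborel" "integrable lborel f"
    "(\<integral>t. f t \<partial>lborel) = 1" "integrable lborel (\<lambda>t. (f t)^2)"
    "\<And>t. F t = (\<integral>s. indicator {..t} s * f s \<partial>lborel)"
  using assms unfolding noise_dist_def set_lebesgue_integral_def by auto

lemma F_bounds:
  assumes "noise_dist F f"
  shows "0 \<le> F t" "F t \<le> 1"
proof -
  note N = noiseD[OF assms]
  have i: "integrable lborel (\<lambda>s. indicator {..t} s * f s)"
    using integrable_real_mult_indicator[of "{..t}" lborel f] N(3) by (simp add: mult.commute)
  show "0 \<le> F t" unfolding N(6) by (rule Bochner_Integration.integral_nonneg) (simp add: N(1))
  have "(\<integral>s. indicator {..t} s * f s \<partial>lborel) \<le> (\<integral>s. f s \<partial>lborel)"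
    by (rule integral_mono[OF i N(3)]) (simp add: N(1) indicator_def)
  then show "F t \<le> 1" using N(4) N(6) by simp
qed

lemma F_mono:
  assumes "noise_dist F f"
  shows "mono F"
proof
  fix s t :: real assume st: "s \<le> t"
  note N = noiseD[OF assms]
  have i: "\<And>t. integrable lborel (\<lambda>s. indicator {..t} s * f s)"
    using integrable_real_mult_indicator[of _ lborel f] N(3) by (simp add: mult.commute)
  show "F s \<le> F t" unfolding N(6)
    by (rule integral_mono[OF i i]) (use st N(1) in \<open>auto simp: indicator_def\<close>)
qed

lemma F_meas:
  assumes "noise_dist F f"
  shows "F \<in> borel_measurable lborel"
  using borel_measurable_mono[OF F_mono[OF assms]] by simp

lemma integrable_gd:
  assumes "noise_dist F f"
  shows "integrable lborel (\<lambda>t. gd n k (F t) * (f t)^2)"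
proof (rule Bochner_Integration.integrable_bound)
  note N = noiseD[OF assms]
  show "integrable lborel (\<lambda>t. (real (n - k) + real (k - 1)) * (f t)^2)"
    using N(5) by simp
  have [measurable]: "F \<in> borel_measurable lborel" "f \<in> borel_measurable lborel"
    using F_meas[OF assms] N(2) by auto
  show "(\<lambda>t. gd n k (F t) * (f t)^2) \<in> borel_measurable lborel"
    unfolding gd_def by measurable
  show "AE t in lborel. norm (gd n k (F t) * (f t)^2) \<le> norm ((real (n - k) + real (k - 1)) * (f t)^2)"
  proof (rule AE_I2)
    fix t
    have "\<bar>gd n k (F t)\<bar> \<le> real (n - k) + real (k - 1)"
      using gd_bound F_bounds[OF assms] by blast
    then show "norm (gd n k (F t) * (f t)^2) \<le> norm ((real (n - k) + real (k - 1)) * (f t)^2)"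
      by (simp add: abs_mult mult_right_mono)
  qed
qed

lemma Bsum_integral:
  assumes "noise_dist F f"
  shows "Bsum n F f r = (\<integral>t. Dsum n r (F t) * (f t)^2 \<partial>lborel)"
proof -
  have "Bsum n F f r = (\<Sum>k=1..r. (\<integral>t. real ((n - 1) choose (k - 1)) * (gd n k (F t) * (f t)^2) \<partial>lborel))"
    unfolding Bsum_def beta_def gfun_deriv by simp
  also have "\<dots> = (\<integral>t. (\<Sum>k=1..r. real ((n - 1) choose (k - 1)) * (gd n k (F t) * (f t)^2)) \<partial>lborel)"
    by (rule Bochner_Integration.integral_sum[symmetric]) (simp add: integrable_gd[OF assms])
  also have "\<dots> = (\<integral>t. Dsum n r (F t) * (f t)^2 \<partial>lborel)"
    unfolding Dsum_def by (simp add: sum_distrib_right mult.assoc)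
  finally show ?thesis .
qed

lemma Bsum_n:
  assumes "noise_dist F f" "n \<ge> 2"
  shows "Bsum n F f n = 0"
  unfolding Bsum_integral[OF assms(1)] Dsum_n[OF assms(2)] by simp

lemma Bsum_nonneg:
  assumes "noise_dist F f" "1 \<le> r" "r \<le> n - 1"
  shows "0 \<le> Bsum n F f r"
  unfolding Bsum_integral[OF assms(1)]
  by (rule Bochner_Integration.integral_nonneg) (use Dsum_nonneg F_bounds[OF assms(1)] assms in auto)




lemma sum_topv:
  assumes "1 \<le> s" "s \<le> n"
  shows "(\<Sum>r=1..n. g r * topv s r) = (\<Sum>r=1..s. g r) / real s"
proof -
  have "(\<Sum>r=1..n. g r * topv s r) = (\<Sum>r=1..s. g r * topv s r)"
    by (rule sum.mono_neutral_right) (use assms in \<open>auto simp: topv_def\<close>)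
  also have "\<dots> = (\<Sum>r=1..s. g r / real s)"
    by (rule sum.cong) (auto simp: topv_def)
  finally show ?thesis by (simp add: sum_divide_distrib)
qed

lemma sum_split_top:
  fixes s n :: nat
  assumes "s \<le> n"
  shows "(\<Sum>r\<in>{s<..n}. g r) = (\<Sum>r=1..n. g r) - (\<Sum>r=1..s. (g r :: real))"
proof -
  have "{1..n} = {1..s} \<union> {s<..n}" using assms by force
  then have "(\<Sum>r=1..n. g r) = (\<Sum>r=1..s. g r) + (\<Sum>r\<in>{s<..n}. g r)"
    by (simp add: sum.union_disjoint ivl_disj_int)
  then show ?thesis by simp
qed

lemma L_topv_sum:
  assumes "1 \<le> s" "s \<le> n"
  shows "(\<Sum>r=1..n. \<Sum>t=1..<r. (b r + b t) * (topv s t - topv s r))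
       = (real s * ((\<Sum>r=1..n. b r) - (\<Sum>r=1..s. b r)) + real (n - s) * (\<Sum>r=1..s. b r)) / real s"
proof -
  have "(\<Sum>r=1..n. \<Sum>t=1..<r. (b r + b t) * (topv s t - topv s r))
      = (\<Sum>r\<in>{s<..n}. \<Sum>t=1..<r. (b r + b t) * (topv s t - topv s r))"
    by (rule sum.mono_neutral_right) (auto simp: topv_def)
  also have "\<dots> = (\<Sum>r\<in>{s<..n}. \<Sum>t=1..s. (b r + b t) / real s)"
  proof (rule sum.cong[OF refl])
    fix r assume r: "r \<in> {s<..n}"
    have "(\<Sum>t=1..<r. (b r + b t) * (topv s t - topv s r)) = (\<Sum>t=1..s. (b r + b t) * (topv s t - topv s r))"
      by (rule sum.mono_neutral_right) (use r in \<open>auto simp: topv_def\<close>)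
    also have "\<dots> = (\<Sum>t=1..s. (b r + b t) / real s)"
      by (rule sum.cong) (use r in \<open>auto simp: topv_def\<close>)
    finally show "(\<Sum>t=1..<r. (b r + b t) * (topv s t - topv s r)) = (\<Sum>t=1..s. (b r + b t) / real s)" .
  qed
  also have "\<dots> = (\<Sum>r\<in>{s<..n}. real s * b r + (\<Sum>t=1..s. b t)) / real s"
    by (simp add: sum_divide_distrib[symmetric] sum.distrib)
  also have "\<dots> = (real s * (\<Sum>r\<in>{s<..n}. b r) + real (n - s) * (\<Sum>t=1..s. b t)) / real s"
    by (simp add: sum.distrib sum_distrib_left)
  finally show ?thesis using sum_split_top[OF assms(2), of b] by simp
qed

lemma M_topv:
  assumes "1 \<le> s" "s \<le> n" "Bsum n F f n = 0"
  shows "Mfun n F f (topv s) \<theta> = (1 + \<theta> * (2 * real s / real n - 1)) * Bsum n F f s / real s"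
proof -
  have R: "Rfun n F f (topv s) = Bsum n F f s / real s"
    unfolding Rfun_def Bsum_def by (rule sum_topv[OF assms(1,2)])
  have L: "Lfun n F f (topv s) = - (1 / real n) * ((real n - 2 * real s) * Bsum n F f s / real s)"
  proof -
    have e: "(\<Sum>r=1..n. beta n F f r) = Bsum n F f n" "(\<Sum>r=1..s. beta n F f r) = Bsum n F f s"
      by (simp_all add: Bsum_def)
    show ?thesis unfolding Lfun_def L_topv_sum[OF assms(1,2)] e assms(3)
      using assms by (simp add: of_nat_diff algebra_simps)
  qed
  have "real s > 0" "real n > 0" using assms by auto
  then show ?thesis unfolding Mfun_def R L by (simp add: field_simps)
qed




lemma conv_H:
  fixes c :: "real \<Rightarrow> real"
  assumes sc: "\<forall>x\<in>{0..}. \<forall>y\<in>{0..}. x \<noteq> y \<longrightarrow>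
        (\<forall>t::real. 0 < t \<and> t < 1 \<longrightarrow> c ((1 - t) * x + t * y) < (1 - t) * c x + t * c y)"
    and p: "0 \<le> p" "p < y" "y < q"
  shows "c y * (q - p) < (q - y) * c p + (y - p) * c q"
proof -
  define t where "t = (y - p) / (q - p)"
  have t: "0 < t" "t < 1" using p by (auto simp: t_def field_simps)
  have "c ((1 - t) * p + t * q) < (1 - t) * c p + t * c q"
    using sc p t by auto
  moreover have "(1 - t) * p + t * q = y"
  proof -
    have "(1 - t) * p + t * q = p + t * (q - p)" by (simp add: algebra_simps)
    moreover have "t * (q - p) = y - p" using p by (simp add: t_def)
    ultimately show ?thesis by simp
  qed
  moreover have "(1 - t) * c p + t * c q = ((q - y) * c p + (y - p) * c q) / (q - p)"
  proof -
    have qp: "q - p \<noteq> 0" using p by simp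
    have e1: "1 - t = (q - y) / (q - p)" using qp by (simp add: t_def field_simps)
    then have "(1 - t) * c p + t * c q = (q - y) / (q - p) * c p + (y - p) / (q - p) * c q"
      by (simp add: t_def)
    also have "\<dots> = ((q - y) * c p + (y - p) * c q) / (q - p)" by (simp add: add_divide_distrib)
    finally show ?thesis .
  qed
  ultimately have "c y < ((q - y) * c p + (y - p) * c q) / (q - p)" by simp
  then show ?thesis using p by (simp add: pos_less_divide_eq)
qed

lemma conv_L1:
  fixes c :: "real \<Rightarrow> real"
  assumes "c y * (q - p) < (q - y) * c p + (y - p) * c q"
  shows "(c y - c p) * (q - p) < (c q - c p) * (y - p)"
  using assms by (simp add: algebra_simps)

lemma conv_L2:
  fixes c :: "real \<Rightarrow> real"
  assumes "c y * (q - p) < (q - y) * c p + (y - p) * c q"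
  shows "(c q - c p) * (q - y) < (c q - c y) * (q - p)"
  using assms by (simp add: algebra_simps)

lemma tangent_right:
  fixes c :: "real \<Rightarrow> real"
  assumes sc: "\<forall>x\<in>{0..}. \<forall>y\<in>{0..}. x \<noteq> y \<longrightarrow>
        (\<forall>t::real. 0 < t \<and> t < 1 \<longrightarrow> c ((1 - t) * x + t * y) < (1 - t) * c x + t * c y)"
    and ab: "0 \<le> a" "a < b" and d: "(c has_real_derivative d) (at a)"
  shows "d \<le> (c b - c a) / (b - a)"
proof -
  have lim: "((\<lambda>y. (c y - c a) / (y - a)) \<longlongrightarrow> d) (at_right a)"
    using has_field_derivative_at_within[OF d, of "{a<..}"] unfolding has_field_derivative_iff .
  have ev: "eventually (\<lambda>y. (c y - c a) / (y - a) \<le> (c b - c a) / (b - a)) (at_right a)"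
    using eventually_at_right_real[OF ab(2)]
  proof eventually_elim
    case (elim y)
    then have "a < y" "y < b" by auto
    have "(c y - c a) * (b - a) < (c b - c a) * (y - a)"
      by (rule conv_L1, rule conv_H[OF sc]) (use ab \<open>a<y\<close> \<open>y<b\<close> in auto)
    then show ?case using \<open>a<y\<close> \<open>a<b\<close> by (simp add: field_simps)
  qed
  show ?thesis by (rule tendsto_upperbound[OF lim ev]) simp
qed

lemma tangent_left:
  fixes c :: "real \<Rightarrow> real"
  assumes sc: "\<forall>x\<in>{0..}. \<forall>y\<in>{0..}. x \<noteq> y \<longrightarrow>
        (\<forall>t::real. 0 < t \<and> t < 1 \<longrightarrow> c ((1 - t) * x + t * y) < (1 - t) * c x + t * c y)"
    and ab: "0 \<le> a" "a < b" and d: "(c has_real_derivative d) (at b)"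
  shows "(c b - c a) / (b - a) \<le> d"
proof -
  have lim: "((\<lambda>y. (c y - c b) / (y - b)) \<longlongrightarrow> d) (at_left b)"
    using has_field_derivative_at_within[OF d, of "{..<b}"] unfolding has_field_derivative_iff .
  have ev: "eventually (\<lambda>y. (c b - c a) / (b - a) \<le> (c y - c b) / (y - b)) (at_left b)"
    using eventually_at_left_real[OF ab(2)]
  proof eventually_elim
    case (elim y)
    then have "a < y" "y < b" by auto
    have "(c b - c a) * (b - y) < (c b - c y) * (b - a)"
      by (rule conv_L2, rule conv_H[OF sc]) (use ab \<open>a<y\<close> \<open>y<b\<close> in auto)
    moreover have "(c y - c b) / (y - b) = (c b - c y) / (b - y)"
      by (metis minus_diff_eq minus_divide_divide)
    ultimately show ?case using \<open>a<y\<close> \<open>y<b\<close> by (simp add: field_simps)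
  qed
  show ?thesis by (rule tendsto_lowerbound[OF lim ev]) simp
qed

lemma deriv_strict:
  assumes c: "admissible_cost c" and ab: "0 \<le> a" "a < b"
  shows "deriv c a < deriv c b"
proof -
  have sc: "\<forall>x\<in>{0..}. \<forall>y\<in>{0..}. x \<noteq> y \<longrightarrow>
        (\<forall>t::real. 0 < t \<and> t < 1 \<longrightarrow> c ((1 - t) * x + t * y) < (1 - t) * c x + t * c y)"
    using c unfolding admissible_cost_def by blast
  have da: "(c has_real_derivative deriv c a) (at a)" and db: "(c has_real_derivative deriv c b) (at b)"
    using c ab unfolding admissible_cost_def DERIV_deriv_iff_real_differentiable by auto
  define m where "m = (a + b) / 2"
  have m: "a < m" "m < b" using ab by (auto simp: m_def)
  have H: "c m * (b - a) < (b - m) * c a + (m - a) * c b"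
    by (rule conv_H[OF sc]) (use ab m in auto)
  have hm: "b - m = (b - a) / 2" "m - a = (b - a) / 2" by (auto simp: m_def field_simps)
  have "(b - m) * c a + (m - a) * c b = (b - a) / 2 * (c a + c b)" unfolding hm by (simp only: distrib_left)
  then have "c m * (b - a) < (b - a) / 2 * (c a + c b)" using H by simp
  moreover have "(b - a) / 2 * (c a + c b) = (b - a) * ((c a + c b) / 2)" by simp
  moreover have "c m * (b - a) = (b - a) * c m" by simp
  ultimately have "(b - a) * c m < (b - a) * ((c a + c b) / 2)" by linarith
  then have "c m < (c a + c b) / 2" using ab by (simp add: mult_less_cancel_left_pos)
  then have cm: "c m - c a < c b - c m" by simp
  have "deriv c a \<le> (c m - c a) / (m - a)" by (rule tangent_right[OF sc ab(1) m(1) da])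
  also have "\<dots> < (c b - c m) / (b - m)" unfolding hm
    by (rule divide_strict_right_mono[OF cm]) (use ab in simp)
  also have "\<dots> \<le> deriv c b" by (rule tangent_left[OF sc _ m(2) db]) (use m ab in simp)
  finally show ?thesis .
qed




lemma Rfun_lin:
  assumes "finite S"
  shows "Rfun n F f (\<lambda>r. \<Sum>s\<in>S. w s * u s r) = (\<Sum>s\<in>S. w s * Rfun n F f (u s))"
proof -
  have "Rfun n F f (\<lambda>r. \<Sum>s\<in>S. w s * u s r) = (\<Sum>r=1..n. \<Sum>s\<in>S. w s * (beta n F f r * u s r))"
    unfolding Rfun_def by (simp add: sum_distrib_left mult_ac)
  also have "\<dots> = (\<Sum>s\<in>S. \<Sum>r=1..n. w s * (beta n F f r * u s r))" by (rule sum.swap)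
  also have "\<dots> = (\<Sum>s\<in>S. w s * Rfun n F f (u s))"
    unfolding Rfun_def by (simp add: sum_distrib_left)
  finally show ?thesis .
qed

lemma Lfun_lin:
  assumes "finite S"
  shows "Lfun n F f (\<lambda>r. \<Sum>s\<in>S. w s * u s r) = (\<Sum>s\<in>S. w s * Lfun n F f (u s))"
proof -
  let ?b = "beta n F f"
  have "(\<Sum>r=1..n. \<Sum>t=1..<r. (?b r + ?b t) * ((\<Sum>s\<in>S. w s * u s t) - (\<Sum>s\<in>S. w s * u s r)))
      = (\<Sum>r=1..n. \<Sum>t=1..<r. \<Sum>s\<in>S. w s * ((?b r + ?b t) * (u s t - u s r)))"
    by (simp add: sum_subtractf[symmetric] sum_distrib_left algebra_simps)
  also have "\<dots> = (\<Sum>r=1..n. \<Sum>s\<in>S. \<Sum>t=1..<r. w s * ((?b r + ?b t) * (u s t - u s r)))"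
    by (rule sum.cong[OF refl], rule sum.swap)
  also have "\<dots> = (\<Sum>s\<in>S. \<Sum>r=1..n. \<Sum>t=1..<r. w s * ((?b r + ?b t) * (u s t - u s r)))"
    by (rule sum.swap)
  also have "\<dots> = (\<Sum>s\<in>S. w s * (\<Sum>r=1..n. \<Sum>t=1..<r. (?b r + ?b t) * (u s t - u s r)))"
    by (simp add: sum_distrib_left)
  finally have e: "(\<Sum>r=1..n. \<Sum>t=1..<r. (?b r + ?b t) * ((\<Sum>s\<in>S. w s * u s t) - (\<Sum>s\<in>S. w s * u s r)))
      = (\<Sum>s\<in>S. w s * (\<Sum>r=1..n. \<Sum>t=1..<r. (?b r + ?b t) * (u s t - u s r)))" .
  show ?thesis unfolding Lfun_def e by (simp add: sum_distrib_left mult_ac)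
qed

lemma Mfun_lin:
  assumes "finite S"
  shows "Mfun n F f (\<lambda>r. \<Sum>s\<in>S. w s * u s r) \<theta> = (\<Sum>s\<in>S. w s * Mfun n F f (u s) \<theta>)"
  unfolding Mfun_def Rfun_lin[OF assms] Lfun_lin[OF assms]
  by (simp add: sum.distrib sum_distrib_left algebra_simps)

lemma Mfun_cong:
  assumes "\<And>r. r \<in> {1..n} \<Longrightarrow> v r = v' r"
  shows "Mfun n F f v \<theta> = Mfun n F f v' \<theta>"
proof -
  have "Rfun n F f v = Rfun n F f v'" unfolding Rfun_def
    by (rule sum.cong) (auto simp: assms)
  moreover have "Lfun n F f v = Lfun n F f v'" unfolding Lfun_def
    by (intro arg_cong[where f="\<lambda>x. - (1 / real n) * x"] sum.cong refl) (auto simp: assms)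
  ultimately show ?thesis by (simp add: Mfun_def)
qed

lemma topv_sum1:
  assumes "1 \<le> s" "s \<le> n"
  shows "(\<Sum>r=1..n. topv s r) = 1"
  using sum_topv[OF assms, of "\<lambda>_. 1"] assms by simp

lemma topv_in:
  assumes "1 \<le> s" "s \<le> n"
  shows "topv s \<in> prizeV n"
  using topv_sum1[OF assms] assms unfolding prizeV_def by (auto simp: topv_def)

lemma M_le_max:
  assumes v: "v \<in> prizeV n" and n: "1 \<le> n"
    and C: "\<And>s. s \<in> {1..n} \<Longrightarrow> Mfun n F f (topv s) \<theta> \<le> C"
  shows "Mfun n F f v \<theta> \<le> C"
proof -
  define v0 where "v0 r = (if r \<le> n then v r else 0)" for r
  define w where "w s = real s * (v0 s - v0 (Suc s))" for s
  have vv: "(\<Sum>s=1..n. w s * topv s r) = v r" if r: "r \<in> {1..n}" for r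
  proof -
    have "(\<Sum>s=1..n. w s * topv s r) = (\<Sum>s=r..n. w s * topv s r)"
      by (rule sum.mono_neutral_right) (use r in \<open>auto simp: topv_def\<close>)
    also have "\<dots> = (\<Sum>s=r..n. - (v0 (Suc s) - v0 s))"
      by (rule sum.cong) (use r in \<open>auto simp: topv_def w_def\<close>)
    also have "\<dots> = - (\<Sum>s=r..n. v0 (Suc s) - v0 s)"
      by (rule sum_negf)
    also have "\<dots> = - (v0 (Suc n) - v0 r)"
      using sum_Suc_diff[of r n v0] r by simp
    finally show ?thesis using r by (simp add: v0_def)
  qed
  have w0: "0 \<le> w s" if "s \<in> {1..n}" for s
    using v that unfolding prizeV_def w_def v0_def
    by (cases "s = n") (auto simp: le_Suc_eq)
  have Meq: "Mfun n F f v \<theta> = (\<Sum>s=1..n. w s * Mfun n F f (topv s) \<theta>)"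
  proof -
    have "Mfun n F f v \<theta> = Mfun n F f (\<lambda>r. \<Sum>s=1..n. w s * topv s r) \<theta>"
      by (rule Mfun_cong) (rule vv[symmetric])
    then show ?thesis using Mfun_lin[of "{1..n}" n F f w topv \<theta>] by simp
  qed
  have "1 = (\<Sum>r=1..n. v r)" using v by (simp add: prizeV_def)
  also have "\<dots> = (\<Sum>r=1..n. \<Sum>s=1..n. w s * topv s r)" by (rule sum.cong[OF refl]) (rule vv[symmetric])
  also have "\<dots> = (\<Sum>s=1..n. \<Sum>r=1..n. w s * topv s r)" by (rule sum.swap)
  also have "\<dots> = (\<Sum>s=1..n. w s)"
    by (rule sum.cong) (auto simp: sum_distrib_left[symmetric] topv_sum1[simplified])
  finally have w1: "(\<Sum>s=1..n. w s) = 1" by simp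
  have "Mfun n F f v \<theta> \<le> (\<Sum>s=1..n. w s * C)"
    unfolding Meq by (rule sum_mono, rule mult_left_mono[OF C w0])
  also have "\<dots> = C" using w1 by (simp add: sum_distrib_right[symmetric])
  finally show ?thesis .
qed

lemma key1:
  fixes p q p' q' X Y :: real
  assumes "0 < q" "0 < q'" "0 \<le> X" "p * q' < p' * q" "p * X \<ge> q * Y" "q' * Y > p' * X"
  shows False
proof -
  have "q' * (p * X) \<ge> q' * (q * Y)" using assms by (intro mult_left_mono) auto
  moreover have "q * (q' * Y) > q * (p' * X)" using assms by (intro mult_strict_left_mono) auto
  ultimately have "(p * q' - p' * q) * X > 0" by (simp add: algebra_simps)
  moreover have "(p * q' - p' * q) * X \<le> 0" using assms by (intro mult_nonpos_nonneg) auto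
  ultimately show False by simp
qed

lemma key2:
  fixes p q p' q' X Y :: real
  assumes "0 < q" "0 < q'" "0 \<le> X" "p * q' < p' * q" "p * X > q * Y" "q' * Y \<ge> p' * X"
  shows False
proof -
  have "q' * (p * X) > q' * (q * Y)" using assms by (intro mult_strict_left_mono) auto
  moreover have "q * (q' * Y) \<ge> q * (p' * X)" using assms by (intro mult_left_mono) auto
  ultimately have "(p * q' - p' * q) * X > 0" by (simp add: algebra_simps)
  moreover have "(p * q' - p' * q) * X \<le> 0" using assms by (intro mult_nonpos_nonneg) auto
  ultimately show False by simp
qed




lemma Acoef_eq: "Acoef n F f t r = (1 + t * (2 * real r / real n - 1)) * (Bsum n F f r / real r)"
  by (simp add: Acoef_def)

lemma cross:
  fixes t t' a b :: real
  assumes "t < t'" "b < a"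
  shows "(1 + t * a) * (1 + t' * b) < (1 + t' * a) * (1 + t * b)"
proof -
  have "(1 + t' * a) * (1 + t * b) - (1 + t * a) * (1 + t' * b) = (t' - t) * (a - b)"
    by (simp add: algebra_simps)
  moreover have "(t' - t) * (a - b) > 0" using assms by simp
  ultimately show ?thesis by linarith
qed

lemma Ppos:
  assumes "0 \<le> t" "t \<le> 1" "1 \<le> r" "0 < n"
  shows "0 < 1 + t * (2 * real r / real n - 1)"
proof -
  have x: "0 < 2 * real r / real n" using assms by simp
  have e: "1 + t * (2 * real r / real n - 1) = (1 - t) + t * (2 * real r / real n)"
    by (simp add: algebra_simps)
  show ?thesis
  proof (cases "t < 1")
    case True
    then show ?thesis unfolding e using assms x by (intro add_pos_nonneg) auto
  next
    case False
    then have "t = 1" using assms by simp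
    then show ?thesis using x by simp
  qed
qed

theorem proposition2:
  fixes n :: nat and F f :: "real \<Rightarrow> real" and \<theta> :: real
  assumes n2: "n \<ge> 2"
    and noise: "noise_dist F f"
    and th: "0 \<le> \<theta>" "\<theta> \<le> 1"
  shows
    "(\<forall>rs\<in>argmaxA n F f \<theta>.
        topv rs \<in> prizeV n \<and>
        (\<forall>v\<in>prizeV n. Mfun n F f v \<theta> \<le> Mfun n F f (topv rs) \<theta>) \<and>
        Mfun n F f (topv rs) \<theta> = Max (Acoef n F f \<theta> ` {1..n-1}) \<and>
        (\<forall>c. admissible_cost c \<longrightarrow>
           (\<forall>v\<in>prizeV n. \<forall>x x'. 0 \<le> x \<and> 0 \<le> x' \<and>
               deriv c x = Mfun n F f v \<theta> \<and> deriv c x' = Mfun n F f (topv rs) \<theta>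
               \<longrightarrow> x \<le> x')))
     \<and> (\<forall>\<theta>'. \<theta> < \<theta>' \<and> \<theta>' \<le> 1 \<longrightarrow>
          Max (argmaxA n F f \<theta>) \<le> Max (argmaxA n F f \<theta>') \<and>
          Min (argmaxA n F f \<theta>) \<le> Min (argmaxA n F f \<theta>'))"
proof -
  have n1: "1 \<le> n" "0 < n" using n2 by auto
  have Bn: "Bsum n F f n = 0" by (rule Bsum_n[OF noise n2])
  have Bnn: "0 \<le> Bsum n F f r" if "r \<in> {1..n-1}" for r
    using Bsum_nonneg[OF noise] that by auto
  have Mtop: "Mfun n F f (topv s) t = Acoef n F f t s" if "s \<in> {1..n}" for s t
    using M_topv[OF _ _ Bn, of s t] that by (simp add: Acoef_def)
  have P: "0 < 1 + t * (2 * real r / real n - 1)" if "0 \<le> t" "t \<le> 1" "r \<in> {1..n-1}" for t r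
    using Ppos[of t r n] that n1 by auto
  have Anonneg: "0 \<le> Acoef n F f t r" if "0 \<le> t" "t \<le> 1" "r \<in> {1..n-1}" for t r
    unfolding Acoef_eq using P[OF that] Bnn[OF that(3)] that(3) by simp
  have An: "Acoef n F f t n = 0" for t by (simp add: Acoef_def Bn)
  have fin: "finite (argmaxA n F f t)" for t by (simp add: argmaxA_def)
  have ne: "argmaxA n F f t \<noteq> {}" for t
  proof -
    let ?S = "Acoef n F f t ` {1..n-1}"
    have "finite ?S" "?S \<noteq> {}" using n2 by auto
    then have "Max ?S \<in> ?S" by (rule Max_in)
    then obtain r where r: "r \<in> {1..n-1}" "Acoef n F f t r = Max ?S" by auto
    have "\<forall>k\<in>{1..n-1}. Acoef n F f t k \<le> Acoef n F f t r"
      unfolding r(2) using \<open>finite ?S\<close> by auto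
    then have "r \<in> argmaxA n F f t" using r(1) by (simp add: argmaxA_def)
    then show ?thesis by auto
  qed
  have amD: "rs \<in> {1..n-1}" "\<And>k. k \<in> {1..n-1} \<Longrightarrow> Acoef n F f t k \<le> Acoef n F f t rs"
    if "rs \<in> argmaxA n F f t" for rs t
    using that by (auto simp: argmaxA_def)
  have i1: "topv rs \<in> prizeV n" if "rs \<in> argmaxA n F f \<theta>" for rs
    using topv_in amD(1)[OF that] by auto
  have i2: "Mfun n F f v \<theta> \<le> Mfun n F f (topv rs) \<theta>" if rs: "rs \<in> argmaxA n F f \<theta>" and v: "v \<in> prizeV n" for rs v
  proof (rule M_le_max[OF v n1(1)])
    fix s assume s: "s \<in> {1..n}"
    have rs1: "rs \<in> {1..n}" using amD(1)[OF rs] by auto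
    show "Mfun n F f (topv s) \<theta> \<le> Mfun n F f (topv rs) \<theta>"
      unfolding Mtop[OF s] Mtop[OF rs1]
    proof (cases "s = n")
      case True
      then show "Acoef n F f \<theta> s \<le> Acoef n F f \<theta> rs" using An Anonneg[OF th amD(1)[OF rs]] by simp
    next
      case False
      then show "Acoef n F f \<theta> s \<le> Acoef n F f \<theta> rs" using amD(2)[OF rs] s by auto
    qed
  qed
  have i3: "Mfun n F f (topv rs) \<theta> = Max (Acoef n F f \<theta> ` {1..n-1})" if rs: "rs \<in> argmaxA n F f \<theta>" for rs
  proof -
    have rs1: "rs \<in> {1..n}" using amD(1)[OF rs] by auto
    have "Max (Acoef n F f \<theta> ` {1..n-1}) = Acoef n F f \<theta> rs"
      by (rule Max_eqI) (use amD[OF rs] in auto)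
    then show ?thesis using Mtop[OF rs1] by simp
  qed
  have i4: "x \<le> x'" if rs: "rs \<in> argmaxA n F f \<theta>" and c: "admissible_cost c" and v: "v \<in> prizeV n"
    and xx: "0 \<le> x" "0 \<le> x'" "deriv c x = Mfun n F f v \<theta>" "deriv c x' = Mfun n F f (topv rs) \<theta>"
    for rs c v x x'
  proof (rule ccontr)
    assume "\<not> x \<le> x'"
    then have "deriv c x' < deriv c x" using deriv_strict[OF c xx(2)] by simp
    then show False using i2[OF rs v] xx by simp
  qed
  have ii1: "Max (argmaxA n F f \<theta>) \<le> Max (argmaxA n F f \<theta>')" if tt: "\<theta> < \<theta>'" "\<theta>' \<le> 1" for \<theta>'
  proof (rule ccontr)
    define R where "R = Max (argmaxA n F f \<theta>)"
    define R' where "R' = Max (argmaxA n F f \<theta>')"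
    assume "\<not> ?thesis"
    then have RR: "R' < R" by (simp add: R_def R'_def)
    have th': "0 \<le> \<theta>'" using tt th by simp
    have R: "R \<in> argmaxA n F f \<theta>" unfolding R_def by (rule Max_in[OF fin ne])
    have R': "R' \<in> argmaxA n F f \<theta>'" unfolding R'_def by (rule Max_in[OF fin ne])
    have "R \<notin> argmaxA n F f \<theta>'"
    proof
      assume "R \<in> argmaxA n F f \<theta>'"
      then have "R \<le> R'" unfolding R'_def by (rule Max_ge[OF fin])
      then show False using RR by simp
    qed
    then obtain k where k: "k \<in> {1..n-1}" "Acoef n F f \<theta>' R < Acoef n F f \<theta>' k"
      using amD(1)[OF R] by (auto simp: argmaxA_def not_le)
    have h1: "Acoef n F f \<theta>' R < Acoef n F f \<theta>' R'" using k amD(2)[OF R' k(1)] by simp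
    have h2: "Acoef n F f \<theta> R' \<le> Acoef n F f \<theta> R" using amD(2)[OF R amD(1)[OF R']] .
    have cab: "2 * real R' / real n - 1 < 2 * real R / real n - 1"
      using RR n1 by (simp add: divide_strict_right_mono)
    have X0: "0 \<le> Bsum n F f R / real R" using Bnn[OF amD(1)[OF R]] by simp
    note h1 = h1[unfolded Acoef_eq] and h2 = h2[unfolded Acoef_eq]
    show False
      using key1[OF P[OF th amD(1)[OF R']] P[OF th' tt(2) amD(1)[OF R']]
            X0 cross[OF tt(1) cab] h2 h1] .
  qed
  have ii2: "Min (argmaxA n F f \<theta>) \<le> Min (argmaxA n F f \<theta>')" if tt: "\<theta> < \<theta>'" "\<theta>' \<le> 1" for \<theta>'
  proof (rule ccontr)
    define R where "R = Min (argmaxA n F f \<theta>)"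
    define R' where "R' = Min (argmaxA n F f \<theta>')"
    assume "\<not> ?thesis"
    then have RR: "R' < R" by (simp add: R_def R'_def)
    have th': "0 \<le> \<theta>'" using tt th by simp
    have R: "R \<in> argmaxA n F f \<theta>" unfolding R_def by (rule Min_in[OF fin ne])
    have R': "R' \<in> argmaxA n F f \<theta>'" unfolding R'_def by (rule Min_in[OF fin ne])
    have "R' \<notin> argmaxA n F f \<theta>"
    proof
      assume "R' \<in> argmaxA n F f \<theta>"
      then have "R \<le> R'" unfolding R_def by (rule Min_le[OF fin])
      then show False using RR by simp
    qed
    then obtain k where k: "k \<in> {1..n-1}" "Acoef n F f \<theta> R' < Acoef n F f \<theta> k"
      using amD(1)[OF R'] by (auto simp: argmaxA_def not_le)
    have h1: "Acoef n F f \<theta> R' < Acoef n F f \<theta> R" using k amD(2)[OF R k(1)] by simp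
    have h2: "Acoef n F f \<theta>' R \<le> Acoef n F f \<theta>' R'" using amD(2)[OF R' amD(1)[OF R]] .
    have cab: "2 * real R' / real n - 1 < 2 * real R / real n - 1"
      using RR n1 by (simp add: divide_strict_right_mono)
    have X0: "0 \<le> Bsum n F f R / real R" using Bnn[OF amD(1)[OF R]] by simp
    note h1 = h1[unfolded Acoef_eq] and h2 = h2[unfolded Acoef_eq]
    show False
      using key2[OF P[OF th amD(1)[OF R']] P[OF th' tt(2) amD(1)[OF R']]
            X0 cross[OF tt(1) cab] h1 h2] .
  qed
  show ?thesis using i1 i2 i3 i4 ii1 ii2 by blast
qed


end
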